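(* Let $\mathcal A$ be a commutative semiring and $\mathcal W$ a semialgebra over $\mathcal A$ with a surpassing relation $\preceq$, and suppose $\mathcal W$ is affine over $\mathcal A$. Let $\mathcal K\subseteq\mathcal W$ be a central sub-semialgebra containing $\mathcal A$ such that $\mathcal W$ has a finite $\preceq$-base $B$ over $\mathcal K$. Then $\mathcal K$ is affine over $\mathcal A$.
   Context: A surpassing relation is a partial preorder $\preceq$ compatible with addition and with multiplication by elements. For a sub-semialgebra $\mathcal K$ containing $\mathcal A$ and $y_1,\dots,y_n$, $\mathcal A[y_1,\dots,y_n]$ denotes the $\mathcal A$-sub-semialgebra they generate. $\mathcal W$ (resp. $\mathcal K$) is affine over $\mathcal A$ if there are finitely many $y_1,\dots,y_n\in\mathcal W$ (resp. in $\mathcal K$) such that for every $w\in\mathcal W$ (resp. $w\in\mathcal K$) there is $w'\in\mathcal A[y_1,\dots,y_n]$ with $w'\preceq w$. $\mathcal K$ is central if $kw=wk$ for all $k\in\mathcal K$, $w\in\mathcal W$. A set $B$ $\preceq$-spans $\mathcal W$ over $\mathcal K$ if every $v\in\mathcal W$ satisfies $\sum_i k_ib_i\preceq v$ for some $k_i\in\mathcal K$, $b_i\in B$; $B$ is $\preceq$-independent over $\mathcal K$ if for distinct $b_i\in B$, $\sum k_ib_i\preceq\sum k_i'b_i$ with $k_i,k_i'\in\mathcal K$ implies $k_i\preceq k_i'$ for all $i$; a $\preceq$-base over $\mathcal K$ is a $\preceq$-independent $\preceq$-spanning set. *)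

theory Defs
  imports Main
begin

text \<open>The semialgebra W is the whole type 'w (a possibly noncommutative semiring with 1);
the commutative base semiring A is given as a subset of W (its image in W).\<close>

definition surpassing :: "('w::semiring_1 \<Rightarrow> 'w \<Rightarrow> bool) \<Rightarrow> bool" where
  "surpassing le \<longleftrightarrow>
     (\<forall>x. le x x) \<and>
     (\<forall>x y z. le x y \<longrightarrow> le y z \<longrightarrow> le x z) \<and>
     (\<forall>x y c. le x y \<longrightarrow> le (x + c) (y + c)) \<and>
     (\<forall>x y c. le x y \<longrightarrow> le (c * x) (c * y) \<and> le (x * c) (y * c))"

definition comm_subsemiring :: "'w::semiring_1 set \<Rightarrow> bool" where
  "comm_subsemiring A \<longleftrightarrow> 0 \<in> A \<and> 1 \<in> A \<and>
     (\<forall>a\<in>A. \<forall>b\<in>A. a + b \<in> A \<and> a * b \<in> A \<and> a * b = b * a)"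

text \<open>W is a semialgebra over A: scalars act by multiplication and are central in W.\<close>
definition semialgebra_over :: "'w::semiring_1 set \<Rightarrow> bool" where
  "semialgebra_over A \<longleftrightarrow> comm_subsemiring A \<and> (\<forall>a\<in>A. \<forall>w. a * w = w * a)"

definition sub_semialgebra :: "'w::semiring_1 set \<Rightarrow> 'w set \<Rightarrow> bool" where
  "sub_semialgebra A K \<longleftrightarrow> A \<subseteq> K \<and> (\<forall>x\<in>K. \<forall>y\<in>K. x + y \<in> K \<and> x * y \<in> K)"

inductive_set gen_alg :: "'w::semiring_1 set \<Rightarrow> 'w set \<Rightarrow> 'w set" for A Y where
  base: "a \<in> A \<Longrightarrow> a \<in> gen_alg A Y"
| gen: "y \<in> Y \<Longrightarrow> y \<in> gen_alg A Y"
| add: "x \<in> gen_alg A Y \<Longrightarrow> y \<in> gen_alg A Y \<Longrightarrow> x + y \<in> gen_alg A Y"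
| mult: "x \<in> gen_alg A Y \<Longrightarrow> y \<in> gen_alg A Y \<Longrightarrow> x * y \<in> gen_alg A Y"

definition affine_over :: "('w::semiring_1 \<Rightarrow> 'w \<Rightarrow> bool) \<Rightarrow> 'w set \<Rightarrow> 'w set \<Rightarrow> bool" where
  "affine_over le A S \<longleftrightarrow>
     (\<exists>Y. finite Y \<and> Y \<subseteq> S \<and> (\<forall>w\<in>S. \<exists>w'\<in>gen_alg A Y. le w' w))"

definition central :: "'w::semiring_1 set \<Rightarrow> bool" where
  "central K \<longleftrightarrow> (\<forall>k\<in>K. \<forall>w. k * w = w * k)"

definition spans :: "('w::semiring_1 \<Rightarrow> 'w \<Rightarrow> bool) \<Rightarrow> 'w set \<Rightarrow> 'w set \<Rightarrow> bool" where
  "spans le K B \<longleftrightarrow>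
     (\<forall>v. \<exists>n::nat. \<exists>k b. (\<forall>i<n. k i \<in> K \<and> b i \<in> B) \<and> le (\<Sum>i<n. k i * b i) v)"

definition independent :: "('w::semiring_1 \<Rightarrow> 'w \<Rightarrow> bool) \<Rightarrow> 'w set \<Rightarrow> 'w set \<Rightarrow> bool" where
  "independent le K B \<longleftrightarrow>
     (\<forall>n::nat. \<forall>b k k'. inj_on b {..<n} \<and> (\<forall>i<n. b i \<in> B \<and> k i \<in> K \<and> k' i \<in> K) \<and>
        le (\<Sum>i<n. k i * b i) (\<Sum>i<n. k' i * b i) \<longrightarrow> (\<forall>i<n. le (k i) (k' i)))"

definition is_base :: "('w::semiring_1 \<Rightarrow> 'w \<Rightarrow> bool) \<Rightarrow> 'w set \<Rightarrow> 'w set \<Rightarrow> bool" where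
  "is_base le K B \<longleftrightarrow> independent le K B \<and> spans le K B"

end

theory Submission
  imports Defs
begin

lemma sp_trans: "surpassing le \<Longrightarrow> le x y \<Longrightarrow> le y z \<Longrightarrow> le x z"
  unfolding surpassing_def by blast
lemma sp_lmult: "surpassing le \<Longrightarrow> le x y \<Longrightarrow> le (c * x) (c * y)"
  unfolding surpassing_def by blast

lemma le_sum_mono:
  assumes "surpassing le" "finite I" "\<And>i. i \<in> I \<Longrightarrow> le (f i) (g i)"
  shows "le (sum f I) (sum g I)"
  using assms(2,3)
proof (induction I rule: finite_induct)
  case empty then show ?case using assms(1) by (simp add: surpassing_def)
next
  case (insert x F)
  have 1: "le (f x + sum f F) (g x + sum f F)" using insert assms(1) unfolding surpassing_def by blast
  have 2: "le (sum f F + g x) (sum g F + g x)" using insert assms(1) unfolding surpassing_def by blast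
  have 3: "le (g x + sum f F) (g x + sum g F)" using 2 by (simp add: add.commute)
  show ?case using insert 1 3 assms(1) unfolding surpassing_def by (metis sum.insert)
qed

lemma le_add_mono:
  assumes "surpassing le" "le x1 x" "le y1 y"
  shows "le (x1 + y1) (x + y)"
proof -
  have "le (x1 + y1) (x + y1)" using assms unfolding surpassing_def by blast
  moreover have "le (y1 + x) (y + x)" using assms unfolding surpassing_def by blast
  ultimately show ?thesis using assms(1) unfolding surpassing_def by (metis add.commute)
qed

lemma le_mult_mono:
  assumes "surpassing le" "le x1 x" "le y1 y"
  shows "le (x1 * y1) (x * y)"
proof -
  have "le (x1 * y1) (x * y1)" using assms unfolding surpassing_def by blast
  moreover have "le (x * y1) (x * y)" using assms unfolding surpassing_def by blast
  ultimately show ?thesis using assms(1) unfolding surpassing_def by blast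
qed

lemma gen_alg_sum:
  assumes "0 \<in> A" "finite I" "\<And>i. i \<in> I \<Longrightarrow> f i \<in> gen_alg A G"
  shows "sum f I \<in> gen_alg A G"
  using assms(2,3)
  by (induction I rule: finite_induct) (auto intro: gen_alg.intros assms(1))

lemma K_sum:
  assumes "0 \<in> K" "\<forall>x\<in>K. \<forall>y\<in>K. x + y \<in> K" "finite I" "\<And>i. i \<in> I \<Longrightarrow> f i \<in> K"
  shows "sum f I \<in> K"
  using assms(3,4)
  by (induction I rule: finite_induct) (auto simp: assms(1,2))

lemma gen_alg_sub:
  assumes "sub_semialgebra A K" "G \<subseteq> K"
  shows "gen_alg A G \<subseteq> K"
proof
  fix x assume "x \<in> gen_alg A G"
  then show "x \<in> K" using assms unfolding sub_semialgebra_def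
    by (induction rule: gen_alg.induct) auto
qed

lemma spans_B:
  assumes "spans le K B" "finite B" "0 \<in> K" "\<forall>x\<in>K. \<forall>y\<in>K. x + y \<in> K"
  shows "\<exists>c. (\<forall>b\<in>B. c b \<in> K) \<and> le (\<Sum>b\<in>B. c b * b) v"
proof -
  obtain n :: nat and k b where kb: "\<forall>i<n. k i \<in> K \<and> b i \<in> B" and l: "le (\<Sum>i<n. k i * b i) v"
    using spec[OF assms(1)[unfolded spans_def], of v] by blast
  define c where "c = (\<lambda>x. \<Sum>i\<in>{i\<in>{..<n}. b i = x}. k i)"
  have "(\<Sum>x\<in>B. c x * x) = (\<Sum>x\<in>B. \<Sum>i\<in>{i\<in>{..<n}. b i = x}. k i * b i)"
    unfolding c_def by (auto simp: sum_distrib_right intro!: sum.cong)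
  also have "\<dots> = (\<Sum>i<n. k i * b i)"
    by (rule sum.group) (use kb assms(2) in auto)
  finally have "(\<Sum>x\<in>B. c x * x) = (\<Sum>i<n. k i * b i)" .
  moreover have "\<forall>x\<in>B. c x \<in> K" unfolding c_def
    by (auto intro!: K_sum assms(3,4) simp: kb)
  ultimately show ?thesis using l by (intro exI[of _ c]) simp
qed

lemma indep_B:
  assumes "independent le K B" "finite B" "\<forall>b\<in>B. c b \<in> K" "\<forall>b\<in>B. d b \<in> K"
    "le (\<Sum>b\<in>B. c b * b) (\<Sum>b\<in>B. d b * b)" "x \<in> B"
  shows "le (c x) (d x)"
proof -
  obtain f where f: "bij_betw f {0..<card B} B" using ex_bij_betw_nat_finite assms(2) by blast
  then have f': "bij_betw f {..<card B} B" by (simp add: atLeast0LessThan)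
  have e1: "(\<Sum>b\<in>B. c b * b) = (\<Sum>i<card B. c (f i) * f i)"
    using sum.reindex_bij_betw[OF f', of "\<lambda>b. c b * b"] by simp
  have e2: "(\<Sum>b\<in>B. d b * b) = (\<Sum>i<card B. d (f i) * f i)"
    using sum.reindex_bij_betw[OF f', of "\<lambda>b. d b * b"] by simp
  have inj: "inj_on f {..<card B}" using f' bij_betw_def by blast
  have mem: "\<forall>i<card B. f i \<in> B \<and> c (f i) \<in> K \<and> d (f i) \<in> K"
    using f' assms(3,4) bij_betwE by fastforce
  have all: "\<forall>i<card B. le (c (f i)) (d (f i))"
  proof -
    have "inj_on f {..<card B} \<and> (\<forall>i<card B. f i \<in> B \<and> c (f i) \<in> K \<and> d (f i) \<in> K) \<and>
        le (\<Sum>i<card B. c (f i) * f i) (\<Sum>i<card B. d (f i) * f i) \<longrightarrow> (\<forall>i<card B. le (c (f i)) (d (f i)))"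
      using assms(1) unfolding independent_def
      by (elim allE[where x="card B"] allE[where x=f] allE[where x="\<lambda>i. c (f i)"] allE[where x="\<lambda>i. d (f i)"]) assumption
    then show ?thesis using inj mem assms(5) e1 e2 by auto
  qed
  obtain i where "i < card B" "f i = x" proof -
    have "x \<in> f ` {..<card B}" using f' assms(6) unfolding bij_betw_def by simp
    then show ?thesis using that by blast
  qed
  then show ?thesis using all by auto
qed

theorem mainTheorem10:
  fixes le :: "'w::semiring_1 \<Rightarrow> 'w \<Rightarrow> bool"
    and A K B :: "'w set"
  assumes "semialgebra_over A"
    and "surpassing le"
    and "affine_over le A UNIV"
    and "sub_semialgebra A K"
    and "central K"
    and "finite B"
    and "is_base le K B"
  shows "affine_over le A K"
proof -
  note sp = assms(2)
  have A0: "0 \<in> A" and A1: "1 \<in> A" using assms(1) unfolding semialgebra_over_def comm_subsemiring_def by auto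
  have AK: "A \<subseteq> K" and Kcl: "\<forall>x\<in>K. \<forall>y\<in>K. x + y \<in> K \<and> x * y \<in> K"
    using assms(4) unfolding sub_semialgebra_def by auto
  have K0: "0 \<in> K" using A0 AK by auto
  have Kadd: "\<forall>x\<in>K. \<forall>y\<in>K. x + y \<in> K" using Kcl by auto
  have spn: "spans le K B" and ind: "independent le K B" using assms(7) unfolding is_base_def by auto
  obtain Y where Y: "finite Y" "\<forall>w. \<exists>w'\<in>gen_alg A Y. le w' w"
    using assms(3) unfolding affine_over_def by auto
  have "\<forall>v. \<exists>c. (\<forall>b\<in>B. c b \<in> K) \<and> le (\<Sum>b\<in>B. c b * b) v"
    using spans_B[OF spn assms(6) K0 Kadd] by blast
  then obtain cv where cv: "\<And>v. (\<forall>b\<in>B. cv v b \<in> K) \<and> le (\<Sum>b\<in>B. cv v b * b) v"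
    by metis
  define V where "V = Y \<union> {1} \<union> (\<lambda>(x,y). x * y) ` (B \<times> B)"
  define G where "G = (\<lambda>(v,b). cv v b) ` (V \<times> B)"
  have finG: "finite G" unfolding G_def V_def using Y(1) assms(6) by auto
  have GK: "G \<subseteq> K" unfolding G_def using cv by auto
  have K0K: "gen_alg A G \<subseteq> K" using gen_alg_sub[OF assms(4) GK] .
  have cvG: "\<And>v b. v \<in> V \<Longrightarrow> b \<in> B \<Longrightarrow> cv v b \<in> gen_alg A G"
    unfolding G_def by (rule gen_alg.gen) auto
  have cent: "\<And>k w. k \<in> K \<Longrightarrow> k * w = w * k" using assms(5) unfolding central_def by auto
  define R where "R x \<longleftrightarrow> (\<exists>c. (\<forall>b\<in>B. c b \<in> gen_alg A G) \<and> le (\<Sum>b\<in>B. c b * b) x)" for x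
  have red: "R x" if "x \<in> gen_alg A Y" for x
    using that
  proof (induction rule: gen_alg.induct)
    case (base a)
    have "le (a * (\<Sum>b\<in>B. cv 1 b * b)) (a * 1)"
      using cv[of 1] sp_lmult[OF sp] by blast
    moreover have "a * (\<Sum>b\<in>B. cv 1 b * b) = (\<Sum>b\<in>B. (a * cv 1 b) * b)"
      by (simp add: sum_distrib_left mult.assoc)
    moreover have "\<forall>b\<in>B. a * cv 1 b \<in> gen_alg A G"
      using base cvG[of 1] V_def by (auto intro: gen_alg.intros)
    ultimately show ?case unfolding R_def by (intro exI[of _ "\<lambda>b. a * cv 1 b"]) simp
  next
    case (gen y)
    then show ?case unfolding R_def using cv[of y] cvG[of y] V_def by auto
  next
    case (add x y)
    then obtain c d where c: "\<forall>b\<in>B. c b \<in> gen_alg A G" "le (\<Sum>b\<in>B. c b * b) x"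
      and d: "\<forall>b\<in>B. d b \<in> gen_alg A G" "le (\<Sum>b\<in>B. d b * b) y" unfolding R_def by auto
    have "le ((\<Sum>b\<in>B. c b * b) + (\<Sum>b\<in>B. d b * b)) (x + y)" using le_add_mono[OF sp c(2) d(2)] .
    moreover have "(\<Sum>b\<in>B. c b * b) + (\<Sum>b\<in>B. d b * b) = (\<Sum>b\<in>B. (c b + d b) * b)"
      by (simp add: sum.distrib distrib_right)
    moreover have "\<forall>b\<in>B. c b + d b \<in> gen_alg A G" using c d by (auto intro: gen_alg.intros)
    ultimately show ?case unfolding R_def by (intro exI[of _ "\<lambda>b. c b + d b"]) simp
  next
    case (mult x y)
    then obtain c d where c: "\<forall>b\<in>B. c b \<in> gen_alg A G" "le (\<Sum>b\<in>B. c b * b) x"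
      and d: "\<forall>b\<in>B. d b \<in> gen_alg A G" "le (\<Sum>b\<in>B. d b * b) y" unfolding R_def by auto
    have 1: "le ((\<Sum>b\<in>B. c b * b) * (\<Sum>b\<in>B. d b * b)) (x * y)" using le_mult_mono[OF sp c(2) d(2)] .
    have 2: "(\<Sum>b\<in>B. c b * b) * (\<Sum>b\<in>B. d b * b) = (\<Sum>b\<in>B. \<Sum>b'\<in>B. (c b * d b') * (b * b'))"
    proof -
      have "(\<Sum>b\<in>B. c b * b) * (\<Sum>b\<in>B. d b * b) = (\<Sum>b\<in>B. \<Sum>b'\<in>B. (c b * b) * (d b' * b'))"
        by (simp add: sum_product)
      also have "\<dots> = (\<Sum>b\<in>B. \<Sum>b'\<in>B. (c b * d b') * (b * b'))"
      proof (intro sum.cong refl)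
        fix b b' assume "b \<in> B" "b' \<in> B"
        then have "d b' \<in> K" using d K0K by auto
        then have "b * d b' = d b' * b" using cent by metis
        then show "(c b * b) * (d b' * b') = (c b * d b') * (b * b')"
          by (metis mult.assoc)
      qed
      finally show ?thesis .
    qed
    have 3: "le (\<Sum>b\<in>B. \<Sum>b'\<in>B. \<Sum>t\<in>B. ((c b * d b') * cv (b * b') t) * t)
                (\<Sum>b\<in>B. \<Sum>b'\<in>B. (c b * d b') * (b * b'))"
    proof (intro le_sum_mono[OF sp assms(6)])
      fix b b' assume "b \<in> B" "b' \<in> B"
      have "le ((c b * d b') * (\<Sum>t\<in>B. cv (b * b') t * t)) ((c b * d b') * (b * b'))"
        using cv[of "b * b'"] sp_lmult[OF sp] by blast
      then show "le (\<Sum>t\<in>B. ((c b * d b') * cv (b * b') t) * t) ((c b * d b') * (b * b'))"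
        by (simp add: sum_distrib_left mult.assoc)
    qed
    have 4: "(\<Sum>b\<in>B. \<Sum>b'\<in>B. \<Sum>t\<in>B. ((c b * d b') * cv (b * b') t) * t)
           = (\<Sum>t\<in>B. (\<Sum>b\<in>B. \<Sum>b'\<in>B. (c b * d b') * cv (b * b') t) * t)"
    proof -
      have "(\<Sum>b\<in>B. \<Sum>b'\<in>B. \<Sum>t\<in>B. ((c b * d b') * cv (b * b') t) * t)
           = (\<Sum>b\<in>B. \<Sum>t\<in>B. \<Sum>b'\<in>B. ((c b * d b') * cv (b * b') t) * t)"
        by (intro sum.cong refl sum.swap)
      also have "\<dots> = (\<Sum>t\<in>B. \<Sum>b\<in>B. \<Sum>b'\<in>B. ((c b * d b') * cv (b * b') t) * t)"
        by (rule sum.swap)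
      also have "\<dots> = (\<Sum>t\<in>B. (\<Sum>b\<in>B. \<Sum>b'\<in>B. (c b * d b') * cv (b * b') t) * t)"
        by (simp add: sum_distrib_right)
      finally show ?thesis .
    qed
    have 5: "\<forall>t\<in>B. (\<Sum>b\<in>B. \<Sum>b'\<in>B. (c b * d b') * cv (b * b') t) \<in> gen_alg A G"
    proof
      fix t assume t: "t \<in> B"
      have "\<And>b b'. b \<in> B \<Longrightarrow> b' \<in> B \<Longrightarrow> cv (b * b') t \<in> gen_alg A G"
        by (rule cvG[OF _ t]) (auto simp: V_def)
      then show "(\<Sum>b\<in>B. \<Sum>b'\<in>B. (c b * d b') * cv (b * b') t) \<in> gen_alg A G"
        using c d by (auto intro!: gen_alg_sum A0 assms(6) gen_alg.mult)
    qed
    have "le (\<Sum>t\<in>B. (\<Sum>b\<in>B. \<Sum>b'\<in>B. (c b * d b') * cv (b * b') t) * t) (x * y)"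
      using sp_trans[OF sp 3[unfolded 4] 1[unfolded 2]] .
    then show ?case unfolding R_def using 5
      by (intro exI[of _ "\<lambda>t. \<Sum>b\<in>B. \<Sum>b'\<in>B. (c b * d b') * cv (b * b') t"]) simp
  qed
  show ?thesis
  proof (cases "B = {}")
    case True
    show ?thesis unfolding affine_over_def
    proof (intro exI[of _ "{}"] conjI ballI)
      fix k assume "k \<in> K"
      have "le (\<Sum>b\<in>B. cv k b * b) k" using cv by blast
      then show "\<exists>w'\<in>gen_alg A {}. le w' k" using True A0 by (auto intro: gen_alg.base)
    qed auto
  next
    case False
    then obtain j where j: "j \<in> B" by auto
    show ?thesis unfolding affine_over_def
    proof (intro exI[of _ G] conjI ballI)
      fix k assume k: "k \<in> K"
      obtain w' where w': "w' \<in> gen_alg A Y" "le w' (k * j)" using Y(2) by blast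
      obtain c where c: "\<forall>b\<in>B. c b \<in> gen_alg A G" "le (\<Sum>b\<in>B. c b * b) w'"
        using red[OF w'(1)] unfolding R_def by auto
      have "(\<Sum>b\<in>B. (if b = j then k else 0) * b) = k * j"
      proof -
        have "(\<Sum>b\<in>B. (if b = j then k else 0) * b) = (\<Sum>b\<in>B. if b = j then k * b else 0)"
          by (intro sum.cong) auto
        also have "\<dots> = k * j" using j assms(6) by (simp add: sum.delta)
        finally show ?thesis .
      qed
      then have l: "le (\<Sum>b\<in>B. c b * b) (\<Sum>b\<in>B. (if b = j then k else 0) * b)"
        using sp_trans[OF sp c(2) w'(2)] by simp
      have "le (c j) (if j = j then k else 0)"
        by (rule indep_B[OF ind assms(6) _ _ l j]) (use c K0K k K0 in auto)
      then show "\<exists>w'\<in>gen_alg A G. le w' k" using c j by auto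
    qed (use finG GK in auto)
  qed
qed

end
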